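(* Let $R$ be a regular run. Then (1) the term SafeToOpen is discrete; (2) for every $t\ge0$, if SafeToOpen holds at $t+$ then it holds at $t$; (3) if SafeToOpen becomes true at a moment $t$, then TrackStatus$(x)$ becomes empty at $t$ for some track $x$.
   Context: Setting (evolving algebra for the railroad crossing). States are structures over a vocabulary containing: a finite universe Tracks; the reals and ExtendedReals $=\mathbb{R}\cup\{\infty\}$ with standard $<$ and $+$ ($\infty$ largest); a nullary real-valued symbol $\mathrm{CT}$ (current time); positive real constants $d_{close},d_{open},d_{min},d_{max}$ with $d_{close}<d_{min}\le d_{max}$; a unary function TrackStatus from Tracks to $\{\text{empty},\text{coming},\text{incrossing}\}$; a unary function Deadline from Tracks to ExtendedReals; a nullary Dir with values in $\{\text{open},\text{close}\}$; a nullary GateStatus with values in $\{\text{opened},\text{closed}\}$. Put $W=d_{min}-d_{close}$ and $\Delta_{close}=d_{close}+(d_{max}-d_{min})=d_{max}-W$. For a track $x$, $s(x)$ is the condition [$\mathrm{TrackStatus}(x)=\text{empty}$ or $\mathrm{CT}+d_{open}<\mathrm{Deadline}(x)$], and SafeToOpen is $\forall x\in\mathrm{Tracks}\ s(x)$. The program has two modules (agents). Gate: simultaneously OpenGate "if Dir=open then GateStatus:=opened" and CloseGate "if Dir=close then GateStatus:=closed". Controller: simultaneously, for every track $x$, SetDeadline$(x)$ "if TrackStatus$(x)$=coming and Deadline$(x)=\infty$ then Deadline$(x):=\mathrm{CT}+W$", SignalClose$(x)$ "if $\mathrm{CT}=$Deadline$(x)$ then Dir:=close", ClearDeadline$(x)$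 "if TrackStatus$(x)$=empty and Deadline$(x)<\infty$ then Deadline$(x):=\infty$", together with SignalOpen "if Dir=close and SafeToOpen then Dir:=open". Executing a module means computing all updates it generates in the current state and performing them simultaneously (nothing happens if the update set is inconsistent). A module is enabled at a state if its update set is consistent and contains an update that changes the state. TrackStatus is external (changed only by the environment); Deadline, Dir, GateStatus are internal (changed only by the modules); other symbols are static. Runs: for $t\mapsto R(t)$, $t\in[0,\infty)$, let $\rho(t)$ be the reduct of $R(t)$ without CT. $R$ is a pre-run if all $R(t)$ share a superuniverse, $\mathrm{CT}=t$ in $R(t)$, and for every $\tau>0$ there are $0=t_0<\dots<t_n=\tau$ with $\rho$ constant on each $(t_i,t_{i+1})$. For a term $e$ (free variables fixed), $e_t$ is its value in $R(t)$, $e_{t+}$ (resp. $e_{t-}$, $t>0$) its constant value on some $(t,t+\epsilon)$ (resp. $(t-\epsilon,t)$); likewise $\rho(t\pm)$. $e$ holds over an interval if it holds at each point; $e$ becomes (is set to) $a$ at $t$ if $e_{t-}\ne a=e_t$ or $e_t\neq a=e_{t+}$. A moment $t$ is significant for $e$ if every neighbourhood of $t$ contains a moment $a$ with $e_a\ne e_t$; $e$ is discrete if its set of significant moments has no limit point in $[0,\infty)$. A pre-run is a run if (i) whenever $\rho(t+)\neq\rho(t)$, $\rho(t+)$ is the CT-free reduct of the result of executing some modules at $R(t)$ (these agents fire at $t$), with external functions equal in $\rho(t)$ and $\rho(t+)$; (ii) whenever $t>0$ and $\rho(t)\ne\rho(t-)$, they differ only in external functions. An agent is immediate if it fires at every moment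 it is enabled; bounded if immediate or there is $b>0$ with no interval $(t,t+b)$ over which it is enabled but never fires. Initial states: TrackStatus$(x)$=empty and Deadline$(x)=\infty$ for every track $x$. A regular run is a run $R$ with $R(0)$ initial such that: (Train Motion) for each track $x$ there is a finite or infinite sequence $0=t_0<t_1<t_2<\cdots$ (the significant moments of $x$) with TrackStatus$(x)$=empty over each $[t_{3i},t_{3i+1})$, =coming over each $[t_{3i+1},t_{3i+2})$ where $d_{min}\le t_{3i+2}-t_{3i+1}\le d_{max}$, =incrossing over each $[t_{3i+2},t_{3i+3})$, and, if the sequence is finite with last element $t_k$, then $3\mid k$ and TrackStatus$(x)$=empty over $[t_k,\infty)$; (Controller Timing) Controller is immediate; (Gate Timing) Gate is bounded, there is no interval $(t,t+d_{close})$ over which Dir=close and GateStatus=opened both hold, and no interval $(t,t+d_{open})$ over which Dir=open and GateStatus=closed both hold. *)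

theory Defs
  imports Complex_Main "HOL-Library.Extended_Real"
begin

datatype tstat = Empty | Coming | Incrossing
datatype dirv = DOpen | DClose
datatype gstat = Opened | Closed

text \<open>CT-free part of a state (the reduct rho). The universe Tracks is the type 'tr;
  CT is the time argument t itself; the static constants are parameters.\<close>
record 'tr rstate =
  TrackStatus :: "'tr \<Rightarrow> tstat"
  Deadline :: "'tr \<Rightarrow> ereal"
  Dir :: dirv
  GateStatus :: gstat

datatype 'tr upd = UDeadline 'tr ereal | UDir dirv | UGate gstat

datatype agent = Gate | Controller

definition consistent :: "'tr upd set \<Rightarrow> bool" where
  "consistent U \<longleftrightarrow>
     (\<forall>x a b. UDeadline x a \<in> U \<and> UDeadline x b \<in> U \<longrightarrow> a = b) \<and>
     (\<forall>a b. UDir a \<in> U \<and> UDir b \<in> U \<longrightarrow> a = b) \<and>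
     (\<forall>a b. UGate a \<in> U \<and> UGate b \<in> U \<longrightarrow> a = b)"

definition apply_upd :: "'tr upd set \<Rightarrow> 'tr rstate \<Rightarrow> 'tr rstate" where
  "apply_upd U \<sigma> = \<sigma>\<lparr>
     Deadline := (\<lambda>x. if \<exists>v. UDeadline x v \<in> U then (SOME v. UDeadline x v \<in> U) else Deadline \<sigma> x),
     Dir := (if \<exists>v. UDir v \<in> U then (SOME v. UDir v \<in> U) else Dir \<sigma>),
     GateStatus := (if \<exists>v. UGate v \<in> U then (SOME v. UGate v \<in> U) else GateStatus \<sigma>)\<rparr>"

definition changes :: "'tr upd \<Rightarrow> 'tr rstate \<Rightarrow> bool" where
  "changes u \<sigma> = (case u of
      UDeadline x v \<Rightarrow> Deadline \<sigma> x \<noteq> v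
    | UDir v \<Rightarrow> Dir \<sigma> \<noteq> v
    | UGate v \<Rightarrow> GateStatus \<sigma> \<noteq> v)"

definition safe_to_open :: "real \<Rightarrow> 'tr rstate \<Rightarrow> real \<Rightarrow> bool" where
  "safe_to_open dopen \<sigma> t \<longleftrightarrow>
     (\<forall>x. TrackStatus \<sigma> x = Empty \<or> ereal (t + dopen) < Deadline \<sigma> x)"

definition gate_updates :: "'tr rstate \<Rightarrow> 'tr upd set" where
  "gate_updates \<sigma> =
     (if Dir \<sigma> = DOpen then {UGate Opened} else {}) \<union>
     (if Dir \<sigma> = DClose then {UGate Closed} else {})"

definition controller_updates ::
    "real \<Rightarrow> real \<Rightarrow> real \<Rightarrow> 'tr rstate \<Rightarrow> real \<Rightarrow> 'tr upd set" where
  "controller_updates dclose dopen dmin \<sigma> t =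
     {UDeadline x (ereal (t + (dmin - dclose))) | x.
        TrackStatus \<sigma> x = Coming \<and> Deadline \<sigma> x = \<infinity>}
   \<union> {UDir DClose | x. ereal t = Deadline \<sigma> x}
   \<union> {UDeadline x \<infinity> | x. TrackStatus \<sigma> x = Empty \<and> Deadline \<sigma> x < \<infinity>}
   \<union> (if Dir \<sigma> = DClose \<and> safe_to_open dopen \<sigma> t then {UDir DOpen} else {})"

definition module_updates ::
    "real \<Rightarrow> real \<Rightarrow> real \<Rightarrow> agent \<Rightarrow> 'tr rstate \<Rightarrow> real \<Rightarrow> 'tr upd set" where
  "module_updates dclose dopen dmin A \<sigma> t = (case A of
      Gate \<Rightarrow> gate_updates \<sigma>
    | Controller \<Rightarrow> controller_updates dclose dopen dmin \<sigma> t)"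

definition exec_agents ::
    "real \<Rightarrow> real \<Rightarrow> real \<Rightarrow> agent set \<Rightarrow> 'tr rstate \<Rightarrow> real \<Rightarrow> 'tr rstate" where
  "exec_agents dclose dopen dmin M \<sigma> t =
     apply_upd (\<Union>A\<in>M. if consistent (module_updates dclose dopen dmin A \<sigma> t)
                       then module_updates dclose dopen dmin A \<sigma> t else {}) \<sigma>"

definition enabled ::
    "real \<Rightarrow> real \<Rightarrow> real \<Rightarrow> agent \<Rightarrow> 'tr rstate \<Rightarrow> real \<Rightarrow> bool" where
  "enabled dclose dopen dmin A \<sigma> t \<longleftrightarrow>
     consistent (module_updates dclose dopen dmin A \<sigma> t) \<and>
     (\<exists>u\<in>module_updates dclose dopen dmin A \<sigma> t. changes u \<sigma>)"

definition pre_run :: "(real \<Rightarrow> 'tr rstate) \<Rightarrow> bool" where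
  "pre_run R \<longleftrightarrow> (\<forall>\<tau>>0. \<exists>ts. ts \<noteq> [] \<and> sorted_wrt (<) ts \<and> hd ts = 0 \<and> last ts = \<tau> \<and>
      (\<forall>i. Suc i < length ts \<longrightarrow> (\<exists>\<sigma>. \<forall>s. ts ! i < s \<and> s < ts ! Suc i \<longrightarrow> R s = \<sigma>)))"

definition fires ::
    "real \<Rightarrow> real \<Rightarrow> real \<Rightarrow> (real \<Rightarrow> 'tr rstate) \<Rightarrow> agent \<Rightarrow> real \<Rightarrow> bool" where
  "fires dclose dopen dmin R A t \<longleftrightarrow>
     (\<exists>\<sigma>. eventually (\<lambda>s. R s = \<sigma>) (at_right t) \<and> \<sigma> \<noteq> R t \<and>
        (\<exists>M. A \<in> M \<and> \<sigma> = exec_agents dclose dopen dmin M (R t) t))"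

definition is_run :: "real \<Rightarrow> real \<Rightarrow> real \<Rightarrow> (real \<Rightarrow> 'tr rstate) \<Rightarrow> bool" where
  "is_run dclose dopen dmin R \<longleftrightarrow> pre_run R \<and>
     (\<forall>t\<ge>0. \<forall>\<sigma>. eventually (\<lambda>s. R s = \<sigma>) (at_right t) \<and> \<sigma> \<noteq> R t \<longrightarrow>
        (\<exists>M. \<sigma> = exec_agents dclose dopen dmin M (R t) t \<and>
             TrackStatus \<sigma> = TrackStatus (R t))) \<and>
     (\<forall>t>0. \<forall>\<sigma>. eventually (\<lambda>s. R s = \<sigma>) (at_left t) \<longrightarrow>
        Deadline \<sigma> = Deadline (R t) \<and> Dir \<sigma> = Dir (R t) \<and> GateStatus \<sigma> = GateStatus (R t))"

definition immediate ::
    "real \<Rightarrow> real \<Rightarrow> real \<Rightarrow> (real \<Rightarrow> 'tr rstate) \<Rightarrow> agent \<Rightarrow> bool" where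
  "immediate dclose dopen dmin R A \<longleftrightarrow>
     (\<forall>t\<ge>0. enabled dclose dopen dmin A (R t) t \<longrightarrow> fires dclose dopen dmin R A t)"

definition bounded_agent ::
    "real \<Rightarrow> real \<Rightarrow> real \<Rightarrow> (real \<Rightarrow> 'tr rstate) \<Rightarrow> agent \<Rightarrow> bool" where
  "bounded_agent dclose dopen dmin R A \<longleftrightarrow> immediate dclose dopen dmin R A \<or>
     (\<exists>b>0. \<forall>t\<ge>0. \<not> ((\<forall>s\<in>{t<..<t+b}. enabled dclose dopen dmin A (R s) s) \<and>
                     (\<forall>s\<in>{t<..<t+b}. \<not> fires dclose dopen dmin R A s)))"

definition initial_state :: "'tr rstate \<Rightarrow> bool" where
  "initial_state \<sigma> \<longleftrightarrow> (\<forall>x. TrackStatus \<sigma> x = Empty \<and> Deadline \<sigma> x = \<infinity>)"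

definition motion_block :: "real \<Rightarrow> real \<Rightarrow> (real \<Rightarrow> tstat) \<Rightarrow> (nat \<Rightarrow> real) \<Rightarrow> nat \<Rightarrow> bool" where
  "motion_block dmin dmax f ts i \<longleftrightarrow>
     (\<forall>s. ts (3*i) \<le> s \<and> s < ts (3*i+1) \<longrightarrow> f s = Empty) \<and>
     (\<forall>s. ts (3*i+1) \<le> s \<and> s < ts (3*i+2) \<longrightarrow> f s = Coming) \<and>
     dmin \<le> ts (3*i+2) - ts (3*i+1) \<and> ts (3*i+2) - ts (3*i+1) \<le> dmax \<and>
     (\<forall>s. ts (3*i+2) \<le> s \<and> s < ts (3*i+3) \<longrightarrow> f s = Incrossing)"

definition train_motion :: "real \<Rightarrow> real \<Rightarrow> (real \<Rightarrow> tstat) \<Rightarrow> bool" where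
  "train_motion dmin dmax f \<longleftrightarrow>
     (\<exists>ts. ts 0 = 0 \<and> strict_mono ts \<and> (\<forall>i. motion_block dmin dmax f ts i)) \<or>
     (\<exists>ts k. ts 0 = 0 \<and> (\<forall>i<k. ts i < ts (Suc i)) \<and> 3 dvd k \<and>
        (\<forall>i. 3*i+3 \<le> k \<longrightarrow> motion_block dmin dmax f ts i) \<and>
        (\<forall>s\<ge>ts k. f s = Empty))"

definition regular_run ::
    "real \<Rightarrow> real \<Rightarrow> real \<Rightarrow> real \<Rightarrow> (real \<Rightarrow> 'tr rstate) \<Rightarrow> bool" where
  "regular_run dclose dopen dmin dmax R \<longleftrightarrow>
     is_run dclose dopen dmin R \<and> initial_state (R 0) \<and>
     (\<forall>x. train_motion dmin dmax (\<lambda>s. TrackStatus (R s) x)) \<and>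
     immediate dclose dopen dmin R Controller \<and>
     bounded_agent dclose dopen dmin R Gate \<and>
     (\<forall>t\<ge>0. \<not> (\<forall>s\<in>{t<..<t+dclose}. Dir (R s) = DClose \<and> GateStatus (R s) = Opened)) \<and>
     (\<forall>t\<ge>0. \<not> (\<forall>s\<in>{t<..<t+dopen}. Dir (R s) = DOpen \<and> GateStatus (R s) = Closed))"

definition significant :: "(real \<Rightarrow> 'a) \<Rightarrow> real \<Rightarrow> bool" where
  "significant f t \<longleftrightarrow> (\<forall>\<epsilon>>0. \<exists>a\<ge>0. \<bar>a - t\<bar> < \<epsilon> \<and> f a \<noteq> f t)"

definition discrete_term :: "(real \<Rightarrow> 'a) \<Rightarrow> bool" where
  "discrete_term f \<longleftrightarrow>
     (\<forall>l\<ge>0. \<exists>\<epsilon>>0. \<forall>s. s \<ge> 0 \<and> significant f s \<and> \<bar>s - l\<bar> < \<epsilon> \<longrightarrow> s = l)"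

definition becomes :: "(real \<Rightarrow> 'a) \<Rightarrow> 'a \<Rightarrow> real \<Rightarrow> bool" where
  "becomes f a t \<longleftrightarrow>
     (0 < t \<and> (\<exists>b. b \<noteq> a \<and> eventually (\<lambda>s. f s = b) (at_left t)) \<and> f t = a) \<or>
     (f t \<noteq> a \<and> eventually (\<lambda>s. f s = a) (at_right t))"

end

theory Submission
  imports Defs
begin

lemma ex_step:
  "xs \<noteq> [] \<Longrightarrow> P (hd xs) \<Longrightarrow> \<not> P (last xs) \<Longrightarrow>
   \<exists>i. Suc i < length xs \<and> P (xs ! i) \<and> \<not> P (xs ! Suc i)"
proof (induction xs)
  case Nil then show ?case by simp
next
  case (Cons a ys)
  show ?case
  proof (cases "ys = []")
    case True then show ?thesis using Cons by simp
  next
    case False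
    show ?thesis
    proof (cases "P (hd ys)")
      case True
      then obtain i where "Suc i < length ys" "P (ys ! i)" "\<not> P (ys ! Suc i)"
        using Cons False by auto
      then show ?thesis by (intro exI[of _ "Suc i"]) auto
    next
      case F: False
      then show ?thesis using Cons False
        by (intro exI[of _ 0]) (auto simp: hd_conv_nth)
    qed
  qed
qed

lemma right_const:
  assumes "pre_run R" "t \<ge> 0"
  shows "\<exists>b>t. \<exists>\<sigma>. \<forall>s. t < s \<and> s < b \<longrightarrow> R s = \<sigma>"
proof -
  obtain ts where ts: "ts \<noteq> []" "hd ts = 0" "last ts = t + 1"
    "\<forall>i. Suc i < length ts \<longrightarrow> (\<exists>\<sigma>. \<forall>s. ts ! i < s \<and> s < ts ! Suc i \<longrightarrow> R s = \<sigma>)"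
    using assms unfolding pre_run_def by (metis add_nonneg_pos zero_less_one)
  obtain i where i: "Suc i < length ts" "ts ! i \<le> t" "\<not> ts ! Suc i \<le> t"
    using ex_step[of ts "\<lambda>x. x \<le> t"] ts assms by auto
  obtain \<sigma> where "\<forall>s. ts ! i < s \<and> s < ts ! Suc i \<longrightarrow> R s = \<sigma>" using ts(4) i(1) by blast
  then show ?thesis using i by (intro exI[of _ "ts ! Suc i"]) auto
qed

lemma left_const:
  assumes "pre_run R" "t > 0"
  shows "\<exists>a<t. \<exists>\<sigma>. \<forall>s. a < s \<and> s < t \<longrightarrow> R s = \<sigma>"
proof -
  obtain ts where ts: "ts \<noteq> []" "hd ts = 0" "last ts = t"
    "\<forall>i. Suc i < length ts \<longrightarrow> (\<exists>\<sigma>. \<forall>s. ts ! i < s \<and> s < ts ! Suc i \<longrightarrow> R s = \<sigma>)"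
    using assms unfolding pre_run_def by metis
  obtain i where i: "Suc i < length ts" "ts ! i < t" "\<not> ts ! Suc i < t"
    using ex_step[of ts "\<lambda>x. x < t"] ts assms by auto
  obtain \<sigma> where "\<forall>s. ts ! i < s \<and> s < ts ! Suc i \<longrightarrow> R s = \<sigma>" using ts(4) i(1) by blast
  then show ?thesis using i by (intro exI[of _ "ts ! i"]) auto
qed

lemma sig_unique:
  fixes f :: "real \<Rightarrow> bool"
  assumes anti: "\<And>s1 s2. a < s1 \<Longrightarrow> s1 < s2 \<Longrightarrow> s2 < b \<Longrightarrow> f s2 \<Longrightarrow> f s1"
    and o: "a < u" "u < v" "v < b"
    and sg: "significant f u" "significant f v"
  shows False
proof (cases "f u")
  case False
  have "min (v-u) (b-v) > 0" using o by simp
  then obtain p where p: "\<bar>p - v\<bar> < min (v-u) (b-v)" "f p \<noteq> f v"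
    using sg(2) unfolding significant_def by blast
  have "\<not> f v" using anti[of u v] o False by blast
  then have "f p" using p by simp
  then show False using anti[of u p] o p False by (auto simp: abs_less_iff)
next
  case True
  have "min (u-a) (v-u) > 0" using o by simp
  then obtain p where p: "\<bar>p - u\<bar> < min (u-a) (v-u)" "f p \<noteq> f u"
    using sg(1) unfolding significant_def by blast
  have np: "\<not> f p" using p True by simp
  have "p > u"
  proof (rule ccontr)
    assume "\<not> p > u"
    then have "p < u" using p by fastforce
    then show False using anti[of p u] o p True np by (auto simp: abs_less_iff)
  qed
  have "min (v-p) (b-v) > 0" using o p by (auto simp: abs_less_iff)
  then obtain q where q: "\<bar>q - v\<bar> < min (v-p) (b-v)" "f q \<noteq> f v"
    using sg(2) unfolding significant_def by blast
  have "\<not> f v" using anti[of p v] o p \<open>p > u\<close> np by (auto simp: abs_less_iff)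
  moreover have "\<not> f q" using anti[of p q] o p q \<open>p > u\<close> np by (auto simp: abs_less_iff)
  ultimately show False using q by simp
qed

lemma sig_right:
  fixes f :: "real \<Rightarrow> bool"
  assumes anti: "\<And>s1 s2. a < s1 \<Longrightarrow> s1 < s2 \<Longrightarrow> s2 < b \<Longrightarrow> f s2 \<Longrightarrow> f s1" and "a < b"
  shows "\<exists>c>a. \<forall>s. a < s \<and> s < c \<longrightarrow> \<not> significant f s"
proof (cases "\<exists>p. a < p \<and> p < b \<and> significant f p")
  case True
  then obtain p where p: "a < p" "p < b" "significant f p" by blast
  have "\<forall>s. a < s \<and> s < p \<longrightarrow> \<not> significant f s"
  proof (intro allI impI)
    fix s assume "a < s \<and> s < p"
    then show "\<not> significant f s"
      using sig_unique[where a=a and b=b and f=f and u=s and v=p] anti p by blast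
  qed
  then show ?thesis using p by blast
next
  case False then show ?thesis using assms by (intro exI[of _ b]) auto
qed

lemma sig_left:
  fixes f :: "real \<Rightarrow> bool"
  assumes anti: "\<And>s1 s2. a < s1 \<Longrightarrow> s1 < s2 \<Longrightarrow> s2 < b \<Longrightarrow> f s2 \<Longrightarrow> f s1" and "a < b"
  shows "\<exists>c<b. \<forall>s. c < s \<and> s < b \<longrightarrow> \<not> significant f s"
proof (cases "\<exists>p. a < p \<and> p < b \<and> significant f p")
  case True
  then obtain p where p: "a < p" "p < b" "significant f p" by blast
  have "\<forall>s. p < s \<and> s < b \<longrightarrow> \<not> significant f s"
  proof (intro allI impI)
    fix s assume "p < s \<and> s < b"
    then show "\<not> significant f s"
      using sig_unique[where a=a and b=b and f=f and u=p and v=s] anti p by blast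
  qed
  then show ?thesis using p by blast
next
  case False then show ?thesis using assms by (intro exI[of _ a]) auto
qed

lemma anti_const:
  assumes "\<forall>s. a < s \<and> s < b \<longrightarrow> R s = \<sigma>"
  shows "\<And>s1 s2. a < s1 \<Longrightarrow> s1 < s2 \<Longrightarrow> s2 < b \<Longrightarrow>
     safe_to_open dopen (R s2) s2 \<Longrightarrow> safe_to_open dopen (R s1) s1"
proof -
  fix s1 s2 assume h: "a < s1" "s1 < s2" "s2 < b" "safe_to_open dopen (R s2) s2"
  have "R s1 = \<sigma>" "R s2 = \<sigma>" using h assms by auto
  have lt: "ereal (s1 + dopen) < ereal (s2 + dopen)" using h by simp
  show "safe_to_open dopen (R s1) s1" unfolding safe_to_open_def
  proof
    fix x
    have "TrackStatus (R s2) x = Empty \<or> ereal (s2 + dopen) < Deadline (R s2) x"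
      using h(4) unfolding safe_to_open_def by blast
    then show "TrackStatus (R s1) x = Empty \<or> ereal (s1 + dopen) < Deadline (R s1) x"
    proof
      assume "TrackStatus (R s2) x = Empty"
      then show ?thesis using \<open>R s1 = \<sigma>\<close> \<open>R s2 = \<sigma>\<close> by simp
    next
      assume "ereal (s2 + dopen) < Deadline (R s2) x"
      with lt have "ereal (s1 + dopen) < Deadline (R s2) x" by (rule less_trans)
      then show ?thesis using \<open>R s1 = \<sigma>\<close> \<open>R s2 = \<sigma>\<close> by simp
    qed
  qed
qed

lemma deadline_keep:
  assumes "TrackStatus \<sigma> x \<noteq> Empty" "Deadline \<sigma> x \<noteq> \<infinity>"
  shows "Deadline (exec_agents dc dop dm M \<sigma> t) x = Deadline \<sigma> x"
proof -
  let ?U = "\<Union>A\<in>M. if consistent (module_updates dc dop dm A \<sigma> t)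
                       then module_updates dc dop dm A \<sigma> t else {}"
  have "\<not> (\<exists>v. UDeadline x v \<in> ?U)"
  proof
    assume "\<exists>v. UDeadline x v \<in> ?U"
    then obtain v A where "UDeadline x v \<in> module_updates dc dop dm A \<sigma> t"
      by (auto split: if_splits)
    then show False using assms
    proof (cases A)
      case Gate
      then show False using \<open>UDeadline x v \<in> module_updates dc dop dm A \<sigma> t\<close>
        by (simp add: module_updates_def gate_updates_def split: if_splits)
    next
      case Controller
      then have "UDeadline x v \<in> controller_updates dc dop dm \<sigma> t"
        using \<open>UDeadline x v \<in> module_updates dc dop dm A \<sigma> t\<close> by (simp add: module_updates_def)
      then show False using assms unfolding controller_updates_def
        by (simp split: if_splits)
    qed
  qed
  then show ?thesis unfolding exec_agents_def apply_upd_def by simp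
qed


lemma part2:
  assumes run: "is_run dc dopen dm R" and t: "t \<ge> 0"
    and ev: "eventually (\<lambda>s. safe_to_open dopen (R s) s) (at_right t)"
  shows "safe_to_open dopen (R t) t"
proof (rule ccontr)
  assume nf: "\<not> safe_to_open dopen (R t) t"
  then obtain x where x: "TrackStatus (R t) x \<noteq> Empty" "\<not> ereal (t + dopen) < Deadline (R t) x"
    unfolding safe_to_open_def by blast
  have pr: "pre_run R" using run unfolding is_run_def by blast
  obtain b \<sigma> where b: "b > t" "\<forall>s. t < s \<and> s < b \<longrightarrow> R s = \<sigma>"
    using right_const[OF pr t] by blast
  have evs: "eventually (\<lambda>s. s \<in> {t<..<b}) (at_right t)"
    using eventually_at_right_real[OF b(1)] .
  have evR: "eventually (\<lambda>s. R s = \<sigma>) (at_right t)"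
    using evs by (rule eventually_mono) (use b in auto)
  have dinf: "Deadline (R t) x \<noteq> \<infinity>" using x(2) by auto
  have same: "TrackStatus \<sigma> x = TrackStatus (R t) x \<and> Deadline \<sigma> x = Deadline (R t) x"
  proof (cases "\<sigma> = R t")
    case True then show ?thesis by simp
  next
    case False
    then obtain M where M: "\<sigma> = exec_agents dc dopen dm M (R t) t"
        "TrackStatus \<sigma> = TrackStatus (R t)"
    proof -
      have rc: "\<forall>t\<ge>0. \<forall>\<sigma>. eventually (\<lambda>s. R s = \<sigma>) (at_right t) \<and> \<sigma> \<noteq> R t \<longrightarrow>
        (\<exists>M. \<sigma> = exec_agents dc dopen dm M (R t) t \<and>
             TrackStatus \<sigma> = TrackStatus (R t))"
        using run unfolding is_run_def by (elim conjE)
      show ?thesis using rc[rule_format, OF t, of \<sigma>] evR False that by blast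
    qed
    have "Deadline \<sigma> x = Deadline (R t) x"
      unfolding M(1) by (rule deadline_keep[OF x(1) dinf])
    then show ?thesis using M(2) by simp
  qed
  have "eventually (\<lambda>s. safe_to_open dopen (R s) s \<and> s \<in> {t<..<b}) (at_right t)"
    using ev evs by (rule eventually_conj)
  then obtain s where s: "safe_to_open dopen (R s) s" "t < s" "s < b"
    using eventually_happens'[OF trivial_limit_at_right_real] by fastforce
  have "R s = \<sigma>" using b s by blast
  have "TrackStatus (R s) x = Empty \<or> ereal (s + dopen) < Deadline (R s) x"
    using s(1) unfolding safe_to_open_def by blast
  then have "ereal (s + dopen) < Deadline (R t) x"
    using \<open>R s = \<sigma>\<close> same x(1) by simp
  moreover have "ereal (t + dopen) < ereal (s + dopen)" using s by simp
  ultimately have "ereal (t + dopen) < Deadline (R t) x" by (rule less_trans[rotated])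
  then show False using x(2) by simp
qed

lemma part3:
  assumes run: "is_run dc dopen dm R" and t: "t \<ge> 0"
    and bc: "becomes (\<lambda>s. safe_to_open dopen (R s) s) True t"
  shows "\<exists>x. becomes (\<lambda>s. TrackStatus (R s) x) Empty t"
proof -
  have c1: "0 < t \<and> eventually (\<lambda>s. \<not> safe_to_open dopen (R s) s) (at_left t)
          \<and> safe_to_open dopen (R t) t"
  proof -
    from bc have "(0 < t \<and> (\<exists>b. b \<noteq> True \<and>
         eventually (\<lambda>s. safe_to_open dopen (R s) s = b) (at_left t)) \<and>
         safe_to_open dopen (R t) t = True) \<or>
        (safe_to_open dopen (R t) t \<noteq> True \<and>
         eventually (\<lambda>s. safe_to_open dopen (R s) s = True) (at_right t))"
      unfolding becomes_def .
    then show ?thesis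
    proof (elim disjE conjE exE)
      fix b assume "0 < t" "b \<noteq> True"
        "eventually (\<lambda>s. safe_to_open dopen (R s) s = b) (at_left t)"
        "safe_to_open dopen (R t) t = True"
      then show ?thesis by simp
    next
      assume "safe_to_open dopen (R t) t \<noteq> True"
        "eventually (\<lambda>s. safe_to_open dopen (R s) s = True) (at_right t)"
      then show ?thesis using part2[OF run t] by simp
    qed
  qed
  have pr: "pre_run R" using run unfolding is_run_def by blast
  obtain a \<sigma> where a: "a < t" "\<forall>s. a < s \<and> s < t \<longrightarrow> R s = \<sigma>"
    using left_const[OF pr] c1 by blast
  have evs: "eventually (\<lambda>s. s \<in> {a<..<t}) (at_left t)"
    using eventually_at_left_real[OF a(1)] .
  have evR: "eventually (\<lambda>s. R s = \<sigma>) (at_left t)"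
    using evs by (rule eventually_mono) (use a in auto)
  have dl: "Deadline \<sigma> = Deadline (R t)"
  proof -
    have rc: "\<forall>t>0. \<forall>\<sigma>. eventually (\<lambda>s. R s = \<sigma>) (at_left t) \<longrightarrow>
        Deadline \<sigma> = Deadline (R t) \<and> Dir \<sigma> = Dir (R t) \<and> GateStatus \<sigma> = GateStatus (R t)"
      using run unfolding is_run_def by (elim conjE)
    show ?thesis using rc[rule_format, of t \<sigma>] evR c1 by blast
  qed
  have "eventually (\<lambda>s. \<not> safe_to_open dopen (R s) s \<and> s \<in> {a<..<t}) (at_left t)"
    using c1 evs by (intro eventually_conj) auto
  then obtain s where s: "\<not> safe_to_open dopen (R s) s" "a < s" "s < t"
    using eventually_happens'[OF trivial_limit_at_left_real] by fastforce
  have Rs: "R s = \<sigma>" using a s by blast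
  obtain x where x: "TrackStatus \<sigma> x \<noteq> Empty" "\<not> ereal (s + dopen) < Deadline \<sigma> x"
    using s(1) Rs unfolding safe_to_open_def by auto
  have "\<not> ereal (t + dopen) < Deadline (R t) x"
  proof
    assume "ereal (t + dopen) < Deadline (R t) x"
    moreover have "ereal (s + dopen) < ereal (t + dopen)" using s by simp
    ultimately have "ereal (s + dopen) < Deadline (R t) x" by (rule less_trans[rotated])
    then have "ereal (s + dopen) < Deadline \<sigma> x" using dl by simp
    then show False using x(2) by simp
  qed
  then have "TrackStatus (R t) x = Empty" using c1 unfolding safe_to_open_def by blast
  moreover have "eventually (\<lambda>s. TrackStatus (R s) x = TrackStatus \<sigma> x) (at_left t)"
    using evR by (rule eventually_mono) simp
  ultimately have "becomes (\<lambda>s. TrackStatus (R s) x) Empty t"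
    unfolding becomes_def
    by (intro disjI1 conjI exI[of _ "TrackStatus \<sigma> x"]) (use c1 x(1) in simp_all)
  then show ?thesis by blast
qed

lemma part1:
  assumes run: "is_run dc dopen dm R"
  shows "discrete_term (\<lambda>s. safe_to_open dopen (R s) s)"
  unfolding discrete_term_def
proof (intro allI impI)
  fix l :: real assume l: "l \<ge> 0"
  let ?f = "\<lambda>s. safe_to_open dopen (R s) s"
  have pr: "pre_run R" using run unfolding is_run_def by blast
  obtain b \<sigma> where b: "b > l" "\<forall>s. l < s \<and> s < b \<longrightarrow> R s = \<sigma>"
    using right_const[OF pr l] by blast
  obtain c1 where c1: "c1 > l" "\<forall>s. l < s \<and> s < c1 \<longrightarrow> \<not> significant ?f s"
  proof -
    have anti1: "\<And>s1 s2. l < s1 \<Longrightarrow> s1 < s2 \<Longrightarrow> s2 < b \<Longrightarrow>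
        safe_to_open dopen (R s2) s2 \<Longrightarrow> safe_to_open dopen (R s1) s1"
      by (rule anti_const[OF b(2)])
    have "\<exists>c>l. \<forall>s. l < s \<and> s < c \<longrightarrow> \<not> significant ?f s"
      apply (rule sig_right[where b=b])
       apply (rule anti1; assumption)
      apply (rule b(1))
      done
    then show ?thesis using that by blast
  qed
  obtain c2 where c2: "c2 < l" "\<forall>s. s \<ge> 0 \<and> c2 < s \<and> s < l \<longrightarrow> \<not> significant ?f s"
  proof (cases "l > 0")
    case True
    obtain a \<sigma>' where a: "a < l" "\<forall>s. a < s \<and> s < l \<longrightarrow> R s = \<sigma>'"
      using left_const[OF pr True] by blast
    obtain c where "c < l" "\<forall>s. c < s \<and> s < l \<longrightarrow> \<not> significant ?f s"
    proof -
      have anti1: "\<And>s1 s2. a < s1 \<Longrightarrow> s1 < s2 \<Longrightarrow> s2 < l \<Longrightarrow>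
          safe_to_open dopen (R s2) s2 \<Longrightarrow> safe_to_open dopen (R s1) s1"
        by (rule anti_const[OF a(2)])
      have "\<exists>c<l. \<forall>s. c < s \<and> s < l \<longrightarrow> \<not> significant ?f s"
        apply (rule sig_left[where a=a])
         apply (rule anti1; assumption)
        apply (rule a(1))
        done
      then show ?thesis using that by blast
    qed
    then show ?thesis using that by blast
  next
    case False
    show ?thesis by (rule that[of "-1"]) (use l False in auto)
  qed
  show "\<exists>\<epsilon>>0. \<forall>s. s \<ge> 0 \<and> significant ?f s \<and> \<bar>s - l\<bar> < \<epsilon> \<longrightarrow> s = l"
  proof (intro exI[of _ "min (c1 - l) (l - c2)"] conjI allI impI)
    show "min (c1 - l) (l - c2) > 0" using c1 c2 by simp
  next
    fix s assume h: "s \<ge> 0 \<and> significant ?f s \<and> \<bar>s - l\<bar> < min (c1 - l) (l - c2)"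
    show "s = l"
    proof (rule ccontr)
      assume "s \<noteq> l"
      then have "s < l \<or> s > l" by auto
      then show False
      proof
        assume "s < l"
        moreover have "c2 < s" using h by (simp add: abs_less_iff)
        ultimately have "\<not> significant ?f s" using c2(2) h by blast
        then show False using h by blast
      next
        assume "s > l"
        moreover have "s < c1" using h by (simp add: abs_less_iff)
        ultimately have "\<not> significant ?f s" using c1(2) by blast
        then show False using h by blast
      qed
    qed
  qed
qed

theorem mainTheorem6:
  fixes R :: "real \<Rightarrow> ('tr::finite) rstate"
    and dclose dopen dmin dmax :: real
  assumes "0 < dclose" and "0 < dopen" and "dclose < dmin" and "dmin \<le> dmax"
    and "regular_run dclose dopen dmin dmax R"
  shows "discrete_term (\<lambda>s. safe_to_open dopen (R s) s)
    \<and> (\<forall>t\<ge>0. eventually (\<lambda>s. safe_to_open dopen (R s) s) (at_right t)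
               \<longrightarrow> safe_to_open dopen (R t) t)
    \<and> (\<forall>t\<ge>0. becomes (\<lambda>s. safe_to_open dopen (R s) s) True t
               \<longrightarrow> (\<exists>x. becomes (\<lambda>s. TrackStatus (R s) x) Empty t))"
proof -
  have run: "is_run dclose dopen dmin R" using assms(5) unfolding regular_run_def by blast
  show ?thesis
  proof (intro conjI allI impI)
    show "discrete_term (\<lambda>s. safe_to_open dopen (R s) s)" by (rule part1[OF run])
  next
    fix t :: real assume "t \<ge> 0" "eventually (\<lambda>s. safe_to_open dopen (R s) s) (at_right t)"
    then show "safe_to_open dopen (R t) t" by (rule part2[OF run])
  next
    fix t :: real assume "t \<ge> 0" "becomes (\<lambda>s. safe_to_open dopen (R s) s) True t"
    then show "\<exists>x. becomes (\<lambda>s. TrackStatus (R s) x) Empty t" by (rule part3[OF run])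
  qed
qed

end
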